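(* Let $G$ and $H$ be finitely generated groups such that $H$ has property $\mathrm{F}_{\mathrm{Cone}}(G)$. Then there are only finitely many conjugacy classes of homomorphisms $H\to G$ (where $\varphi_1,\varphi_2$ are conjugate if there is $g\in G$ with $\varphi_2(h)=g\varphi_1(h)g^{-1}$ for all $h\in H$).
   Context: Fix a word metric $d_S$ on $G$ with respect to a finite generating set $S$. For a non-principal ultrafilter $\omega$ on $\mathbb{N}$, a sequence $\lambda_n\to\infty$ of positive reals and basepoints $\bullet_n\in G$, the asymptotic cone $\mathrm{Cone}_\omega(G,d_S,(\lambda_n),(\bullet_n))$ is the set of sequences $(x_n)$ in $G$ with $\sup_n\frac1{\lambda_n}d_S(x_n,\bullet_n)<\infty$, modulo $\lim_\omega\frac1{\lambda_n}d_S(x_n,y_n)=0$, with metric $\lim_\omega\frac1{\lambda_n}d_S(x_n,y_n)$. Given such a cone and homomorphisms $\varphi_n\colon H\to G$ such that $\sup_n\frac1{\lambda_n}d_S(\varphi_n(h)\bullet_n,\bullet_n)<\infty$ for every $h\in H$, $H$ acts isometrically on the cone by $h\cdot[x_n]=[\varphi_n(h)x_n]$. The group $H$ has property $\mathrm{F}_{\mathrm{Cone}}(G)$ if for every asymptotic cone of $G$ and every such sequence of homomorphisms, the induced action has a fixed point. *)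

theory Defs
  imports "HOL-Algebra.Algebra" "HOL-Analysis.Analysis"
begin

definition fin_gen :: "('a, 'b) monoid_scheme \<Rightarrow> bool" where
  "fin_gen G \<longleftrightarrow> (\<exists>S. finite S \<and> S \<subseteq> carrier G \<and> generate G S = carrier G)"

definition word_len :: "('a, 'b) monoid_scheme \<Rightarrow> 'a set \<Rightarrow> 'a \<Rightarrow> nat" where
  "word_len G S x = (LEAST n. \<exists>ws. length ws = n \<and> set ws \<subseteq> S \<union> (\<lambda>s. inv\<^bsub>G\<^esub> s) ` S
       \<and> foldr (\<lambda>a b. a \<otimes>\<^bsub>G\<^esub> b) ws \<one>\<^bsub>G\<^esub> = x)"

definition word_dist :: "('a, 'b) monoid_scheme \<Rightarrow> 'a set \<Rightarrow> 'a \<Rightarrow> 'a \<Rightarrow> real" where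
  "word_dist G S x y = real (word_len G S (inv\<^bsub>G\<^esub> x \<otimes>\<^bsub>G\<^esub> y))"

definition nonprincipal_ultrafilter :: "nat filter \<Rightarrow> bool" where
  "nonprincipal_ultrafilter \<omega> \<longleftrightarrow> \<omega> \<noteq> bot
     \<and> (\<forall>P. eventually P \<omega> \<or> eventually (\<lambda>n. \<not> P n) \<omega>)
     \<and> (\<forall>k. eventually (\<lambda>n. n \<noteq> k) \<omega>)"

text \<open>A point of the cone is represented by a sequence (x_n) in G with
  sup_n d_S(x_n, b_n)/\<lambda>_n < \<infinity>; two sequences represent the same point iff
  lim_\<omega> d_S(x_n,y_n)/\<lambda>_n = 0.  Hence [x] is a fixed point of the induced action
  iff lim_\<omega> d_S(\<phi>_n(h) x_n, x_n)/\<lambda>_n = 0 for every h in H.\<close>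
definition has_F_Cone ::
  "('a, 'b) monoid_scheme \<Rightarrow> 'a set \<Rightarrow> ('c, 'd) monoid_scheme \<Rightarrow> bool" where
  "has_F_Cone G S H \<longleftrightarrow>
    (\<forall>(\<omega>::nat filter) (lam::nat \<Rightarrow> real) (bp::nat \<Rightarrow> 'a) (\<phi>::nat \<Rightarrow> 'c \<Rightarrow> 'a).
       nonprincipal_ultrafilter \<omega>
       \<and> (\<forall>n. lam n > 0) \<and> filterlim lam at_top sequentially
       \<and> (\<forall>n. bp n \<in> carrier G)
       \<and> (\<forall>n. \<phi> n \<in> hom H G)
       \<and> (\<forall>h\<in>carrier H. bdd_above (range (\<lambda>n. word_dist G S (\<phi> n h \<otimes>\<^bsub>G\<^esub> bp n) (bp n) / lam n)))
     \<longrightarrow> (\<exists>x::nat \<Rightarrow> 'a. (\<forall>n. x n \<in> carrier G)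
            \<and> bdd_above (range (\<lambda>n. word_dist G S (x n) (bp n) / lam n))
            \<and> (\<forall>h\<in>carrier H.
                 ((\<lambda>n. word_dist G S (\<phi> n h \<otimes>\<^bsub>G\<^esub> x n) (x n) / lam n) \<longlongrightarrow> 0) \<omega>)))"

definition hom_conj_rel ::
  "('c, 'd) monoid_scheme \<Rightarrow> ('a, 'b) monoid_scheme \<Rightarrow> (('c \<Rightarrow> 'a) \<times> ('c \<Rightarrow> 'a)) set" where
  "hom_conj_rel H G = {(\<phi>1, \<phi>2). \<phi>1 \<in> hom H G \<and> \<phi>2 \<in> hom H G \<and>
      (\<exists>g\<in>carrier G. \<forall>h\<in>carrier H. \<phi>2 h = g \<otimes>\<^bsub>G\<^esub> \<phi>1 h \<otimes>\<^bsub>G\<^esub> inv\<^bsub>G\<^esub> g)}"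

end

theory Submission
  imports Defs
begin


lemma ex_npu: "\<exists>\<omega>. nonprincipal_ultrafilter \<omega>"
proof -
  let ?F = "cofinite :: nat filter"
  let ?R = "{(b, a). a \<noteq> bot \<and> a \<le> b \<and> b \<le> ?F}"
  have F: "?F \<noteq> bot" by simp
  have bot_notin_R: "c \<in> Chains ?R \<Longrightarrow> bot \<notin> c" for c
    by (auto simp: Chains_def)
  have [simp]: "Field ?R = {G. G \<noteq> bot \<and> G \<le> ?F}"
    by (auto simp: Field_def bot_unique)
  have "\<exists>m\<in>Field ?R. \<forall>a\<in>Field ?R. (m, a) \<in> ?R \<longrightarrow> a = m"
  proof (rule Zorns_po_lemma)
    show "Partial_order ?R"
      by (auto simp: partial_order_on_def preorder_on_def
          antisym_def refl_on_def trans_def Field_def bot_unique)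
    show "\<exists>u\<in>Field ?R. \<forall>a\<in>C. (a, u) \<in> ?R" if C: "C \<in> Chains ?R" for C
    proof (simp, intro exI conjI ballI)
      have Inf_C: "Inf C \<noteq> bot" "Inf C \<le> ?F" if "C \<noteq> {}"
      proof -
        from C that have "Inf C = bot \<longleftrightarrow> (\<exists>x\<in>C. x = bot)"
          unfolding trivial_limit_def by (intro eventually_Inf_base) (auto simp: Chains_def)
        with C show "Inf C \<noteq> bot"
          by (simp add: bot_notin_R)
        from that obtain x where "x \<in> C" by auto
        with C show "Inf C \<le> ?F"
          by (auto intro!: Inf_lower2[of x] simp: Chains_def)
      qed
      then have [simp]: "inf ?F (Inf C) = (if C = {} then ?F else Inf C)"
        using C by (auto simp add: inf_absorb2)
      from C show "inf ?F (Inf C) \<noteq> bot"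
        by (simp add: F Inf_C)
      from C show "inf ?F (Inf C) \<le> ?F"
        by (simp add: Chains_def Inf_C F)
      with C show "inf ?F (Inf C) \<le> x" "x \<le> ?F" if "x \<in> C" for x
        using that by (auto intro: Inf_lower simp: Chains_def)
    qed
  qed
  then obtain U where U1: "U \<noteq> bot" "U \<le> ?F"
    and U2: "\<And>G. G \<noteq> bot \<Longrightarrow> G \<le> U \<Longrightarrow> G = U"
    by auto
  have ultra: "eventually P U \<or> eventually (\<lambda>n. \<not> P n) U" for P
  proof (rule disjCI)
    assume "\<not> eventually (\<lambda>n. \<not> P n) U"
    then have "inf U (principal {x. P x}) \<noteq> bot"
      by (simp add: trivial_limit_def eventually_inf_principal not_eventually)
    then have E: "inf U (principal {x. P x}) = U"
      by (rule U2) simp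
    show "eventually P U"
      by (subst E[symmetric]) (simp add: eventually_inf_principal)
  qed
  have "eventually (\<lambda>n. n \<noteq> k) U" for k
  proof -
    have "eventually (\<lambda>n. n \<noteq> k) ?F" by (simp add: eventually_cofinite)
    thus ?thesis using U1(2) by (simp add: le_filter_def)
  qed
  thus ?thesis using U1 ultra unfolding nonprincipal_ultrafilter_def by blast
qed


locale wl = group +
  fixes S :: "'a set"
  assumes S_sub: "S \<subseteq> carrier G" and S_gen: "generate G S = carrier G"
begin

definition A where "A = S \<union> (\<lambda>s. inv s) ` S"
definition prd where "prd ws = foldr (\<lambda>a b. a \<otimes> b) ws \<one>"

lemma A_sub: "A \<subseteq> carrier G" using S_sub by (auto simp: A_def)

lemma prd_carrier: "set ws \<subseteq> A \<Longrightarrow> prd ws \<in> carrier G"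
  using A_sub by (induction ws) (auto simp: prd_def)

lemma prd_append: "set xs \<subseteq> A \<Longrightarrow> set ys \<subseteq> A \<Longrightarrow> prd (xs @ ys) = prd xs \<otimes> prd ys"
proof (induction xs)
  case Nil then show ?case using prd_carrier[of ys] by (simp add: prd_def)
next
  case (Cons a xs)
  then have "a \<in> carrier G" using A_sub by auto
  with Cons show ?case using prd_carrier[of xs] prd_carrier[of ys]
    by (simp add: prd_def m_assoc)
qed

lemma word_exists: "x \<in> carrier G \<Longrightarrow> \<exists>ws. set ws \<subseteq> A \<and> prd ws = x"
proof -
  assume "x \<in> carrier G"
  then have "x \<in> generate G S" using S_gen by simp
  then show ?thesis
  proof (induction rule: generate.induct)
    case one then show ?case by (intro exI[of _ "[]"]) (simp add: prd_def)
  next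
    case (incl h) then show ?case using S_sub
      by (intro exI[of _ "[h]"]) (auto simp: prd_def A_def)
  next
    case (inv h) then show ?case using S_sub
      by (intro exI[of _ "[inv h]"]) (auto simp: prd_def A_def)
  next
    case (eng h1 h2)
    then obtain w1 w2 where "set w1 \<subseteq> A" "prd w1 = h1" "set w2 \<subseteq> A" "prd w2 = h2" by blast
    then show ?case by (intro exI[of _ "w1 @ w2"]) (simp add: prd_append)
  qed
qed

lemma wl_eq: "word_len G S x = (LEAST n. \<exists>ws. length ws = n \<and> set ws \<subseteq> A \<and> prd ws = x)"
  by (simp add: word_len_def A_def prd_def)

lemma wl_word: "x \<in> carrier G \<Longrightarrow> \<exists>ws. length ws = word_len G S x \<and> set ws \<subseteq> A \<and> prd ws = x"
proof -
  assume "x \<in> carrier G"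
  then obtain w where "set w \<subseteq> A \<and> prd w = x" using word_exists by blast
  then have "\<exists>n ws. length ws = n \<and> set ws \<subseteq> A \<and> prd ws = x" by blast
  from LeastI_ex[OF this] show ?thesis unfolding wl_eq .
qed

lemma wl_le: "set ws \<subseteq> A \<Longrightarrow> prd ws = x \<Longrightarrow> word_len G S x \<le> length ws"
  unfolding wl_eq by (rule Least_le) blast

lemma wl_one: "word_len G S \<one> = 0"
  using wl_le[of "[]" \<one>] by (simp add: prd_def)

lemma wl_mult: "x \<in> carrier G \<Longrightarrow> y \<in> carrier G \<Longrightarrow> word_len G S (x \<otimes> y) \<le> word_len G S x + word_len G S y"
proof -
  assume "x \<in> carrier G" "y \<in> carrier G"
  then obtain w1 w2 where "length w1 = word_len G S x" "set w1 \<subseteq> A" "prd w1 = x"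
     "length w2 = word_len G S y" "set w2 \<subseteq> A" "prd w2 = y" using wl_word by metis
  then show ?thesis using wl_le[of "w1 @ w2" "x \<otimes> y"] by (simp add: prd_append)
qed

lemma prd_inv: "set ws \<subseteq> A \<Longrightarrow> prd (rev (map (m_inv G) ws)) = inv (prd ws) \<and> set (rev (map (m_inv G) ws)) \<subseteq> A"
proof (induction ws)
  case Nil then show ?case by (simp add: prd_def)
next
  case (Cons a ws)
  then have a: "a \<in> carrier G" "a \<in> A" using A_sub by auto
  have ia: "inv a \<in> A" using a(2) S_sub by (auto simp: A_def)
  have "prd (rev (map (m_inv G) (a # ws))) = prd (rev (map (m_inv G) ws)) \<otimes> prd [inv a]"
    using Cons ia by (simp add: prd_append)
  also have "\<dots> = inv (prd ws) \<otimes> inv a" using Cons a by (simp add: prd_def)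
  also have "\<dots> = inv (prd (a # ws))" using Cons a prd_carrier[of ws]
    by (simp add: prd_def inv_mult_group)
  finally show ?case using Cons ia by simp
qed

lemma wl_inv: "x \<in> carrier G \<Longrightarrow> word_len G S (inv x) \<le> word_len G S x"
proof -
  assume "x \<in> carrier G"
  then obtain w where "length w = word_len G S x" "set w \<subseteq> A" "prd w = x" using wl_word by metis
  then show ?thesis using wl_le[of "rev (map (m_inv G) w)" "inv x"] prd_inv[of w] by simp
qed

lemma wl_inv_eq: "x \<in> carrier G \<Longrightarrow> word_len G S (inv x) = word_len G S x"
  using wl_inv[of x] wl_inv[of "inv x"] by simp

lemma finite_ball: "finite S \<Longrightarrow> finite {x \<in> carrier G. word_len G S x \<le> n}"
proof -
  assume fS: "finite S"
  have fA: "finite A" using fS by (simp add: A_def)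
  have "{x \<in> carrier G. word_len G S x \<le> n} \<subseteq> prd ` {ws. set ws \<subseteq> A \<and> length ws \<le> n}"
  proof
    fix x assume "x \<in> {x \<in> carrier G. word_len G S x \<le> n}"
    then obtain w where "length w = word_len G S x" "set w \<subseteq> A" "prd w = x" "word_len G S x \<le> n"
      using wl_word by auto
    then show "x \<in> prd ` {ws. set ws \<subseteq> A \<and> length ws \<le> n}" by auto
  qed
  moreover have "finite {ws. set ws \<subseteq> A \<and> length ws \<le> n}"
    using finite_lists_length_le[OF fA] by simp
  ultimately show ?thesis by (meson finite_surj)
qed

end


lemma (in group) cancel1: "y \<in> carrier G \<Longrightarrow> x \<in> carrier G \<Longrightarrow> y \<otimes> x \<otimes> inv x = y"
  by (simp add: m_assoc)
lemma (in group) cancel2: "y \<in> carrier G \<Longrightarrow> x \<in> carrier G \<Longrightarrow> y \<otimes> inv x \<otimes> x = y"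
  by (simp add: m_assoc)

lemma (in group) conj_mult: "a \<in> carrier G \<Longrightarrow> b \<in> carrier G \<Longrightarrow> x \<in> carrier G \<Longrightarrow>
  x \<otimes> (a \<otimes> b) \<otimes> inv x = (x \<otimes> a \<otimes> inv x) \<otimes> (x \<otimes> b \<otimes> inv x)"
  by (simp add: m_assoc[symmetric] cancel1 cancel2)

lemma (in group) conj_conj: "a \<in> carrier G \<Longrightarrow> x \<in> carrier G \<Longrightarrow> y \<in> carrier G \<Longrightarrow>
  y \<otimes> (x \<otimes> a \<otimes> inv x) \<otimes> inv y = (y \<otimes> x) \<otimes> a \<otimes> inv (y \<otimes> x)"
  by (simp add: m_assoc inv_mult_group)

lemma (in group) conj_back: "a \<in> carrier G \<Longrightarrow> x \<in> carrier G \<Longrightarrow>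
  inv x \<otimes> (x \<otimes> a \<otimes> inv x) \<otimes> x = a"
  by (simp add: m_assoc[symmetric] cancel1 cancel2)

lemma (in group) conj_dist: "a \<in> carrier G \<Longrightarrow> x \<in> carrier G \<Longrightarrow>
  inv (inv x \<otimes> a \<otimes> inv (inv x) \<otimes> \<one>) \<otimes> \<one> = inv (a \<otimes> x) \<otimes> x"
  by (simp add: m_assoc inv_mult_group)

lemma conj_hom:
  assumes G: "group G" and H: "group H" and \<phi>: "\<phi> \<in> hom H G" and x: "x \<in> carrier G"
  shows "(\<lambda>h. x \<otimes>\<^bsub>G\<^esub> \<phi> h \<otimes>\<^bsub>G\<^esub> inv\<^bsub>G\<^esub> x) \<in> hom H G"
proof -
  interpret G: group G by fact
  interpret H: group H by fact
  show ?thesis using \<phi> x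
    by (auto simp: hom_def G.conj_mult Pi_iff)
qed

lemma equiv_conj: assumes G: "group G" and H: "group H"
  shows "equiv (hom H G) (hom_conj_rel H G)"
proof -
  interpret G: group G by fact
  have c: "\<phi> \<in> hom H G \<Longrightarrow> h \<in> carrier H \<Longrightarrow> \<phi> h \<in> carrier G" for \<phi> h by (auto simp: hom_def)
  show ?thesis
  proof (rule equivI)
    show "hom_conj_rel H G \<subseteq> hom H G \<times> hom H G" by (auto simp: hom_conj_rel_def)
    show "refl_on (hom H G) (hom_conj_rel H G)"
      by (auto simp: refl_on_def hom_conj_rel_def c intro!: bexI[of _ "\<one>\<^bsub>G\<^esub>"])
    show "sym (hom_conj_rel H G)"
    proof (rule symI)
      fix a b assume "(a, b) \<in> hom_conj_rel H G"
      then obtain g where "a \<in> hom H G" "b \<in> hom H G" "g \<in> carrier G"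
        "\<forall>h\<in>carrier H. b h = g \<otimes>\<^bsub>G\<^esub> a h \<otimes>\<^bsub>G\<^esub> inv\<^bsub>G\<^esub> g"
        by (auto simp: hom_conj_rel_def)
      then show "(b, a) \<in> hom_conj_rel H G"
        by (auto simp: hom_conj_rel_def c G.conj_back intro!: bexI[of _ "inv\<^bsub>G\<^esub> g"])
    qed
    show "trans (hom_conj_rel H G)"
    proof (rule transI)
      fix a b d assume "(a, b) \<in> hom_conj_rel H G" "(b, d) \<in> hom_conj_rel H G"
      then obtain g g' where "a \<in> hom H G" "b \<in> hom H G" "d \<in> hom H G" "g \<in> carrier G" "g' \<in> carrier G"
        "\<forall>h\<in>carrier H. b h = g \<otimes>\<^bsub>G\<^esub> a h \<otimes>\<^bsub>G\<^esub> inv\<^bsub>G\<^esub> g"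
        "\<forall>h\<in>carrier H. d h = g' \<otimes>\<^bsub>G\<^esub> b h \<otimes>\<^bsub>G\<^esub> inv\<^bsub>G\<^esub> g'"
        by (auto simp: hom_conj_rel_def)
      then show "(a, d) \<in> hom_conj_rel H G"
        by (auto simp: hom_conj_rel_def c G.conj_conj intro!: bexI[of _ "g' \<otimes>\<^bsub>G\<^esub> g"])
    qed
  qed
qed

lemma hom_agree_gen:
  assumes G: "group G" and H: "group H" and \<phi>: "\<phi> \<in> hom H G" and \<psi>: "\<psi> \<in> hom H G"
    and T: "T \<subseteq> carrier H" and eq: "\<forall>t\<in>T. \<phi> t = \<psi> t" and h: "h \<in> generate H T"
  shows "\<phi> h = \<psi> h"
proof -
  interpret HH: group H by fact
  interpret p: group_hom H G \<phi> using assms by (simp add: group_hom_def group_hom_axioms_def)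
  interpret q: group_hom H G \<psi> using assms by (simp add: group_hom_def group_hom_axioms_def)
  from h show ?thesis
  proof (induction rule: generate.induct)
    case one then show ?case by simp
  next
    case (incl h) then show ?case using eq by simp
  next
    case (inv h) then have "h \<in> carrier H" using T by auto
    then show ?case using eq inv p.hom_inv q.hom_inv by simp
  next
    case (eng h1 h2)
    have "h1 \<in> carrier H" "h2 \<in> carrier H"
      using eng.hyps HH.generate_in_carrier[OF T] by auto
    then show ?case using eng by simp
  qed
qed

lemma class_agree:
  assumes "\<forall>h\<in>carrier H. \<phi> h = \<psi> h" "\<phi> \<in> hom H G" "\<psi> \<in> hom H G"
  shows "hom_conj_rel H G `` {\<phi>} = hom_conj_rel H G `` {\<psi>}"
  using assms by (auto simp: hom_conj_rel_def)



theorem proposition5p4: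
  fixes G :: "('a, 'b) monoid_scheme" and H :: "('c, 'd) monoid_scheme" and S :: "'a set"
  assumes "group G" and "group H"
    and "finite S" and "S \<subseteq> carrier G" and "generate G S = carrier G"
    and "fin_gen H"
    and "has_F_Cone G S H"
  shows "finite (hom H G // hom_conj_rel H G)"
proof (rule ccontr)
  assume inf: "infinite (hom H G // hom_conj_rel H G)"
  interpret G: group G by fact
  interpret H: group H by fact
  interpret W: wl G S using assms by (simp add: wl_def wl_axioms_def)
  obtain T where T: "finite T" "T \<subseteq> carrier H" "generate H T = carrier H"
    using assms(6) by (auto simp: fin_gen_def)
  define L where "L = word_len G S"
  define N where "N \<phi> x = Max (insert 0 ((\<lambda>t. L (inv\<^bsub>G\<^esub> (\<phi> t \<otimes>\<^bsub>G\<^esub> x) \<otimes>\<^bsub>G\<^esub> x)) ` T))" for \<phi> x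
  define r where "r = hom_conj_rel H G"
  define Q where "Q = hom H G // r"
  have eqv: "equiv (hom H G) r" unfolding r_def by (rule equiv_conj[OF assms(1,2)])
  have hc: "\<phi> \<in> hom H G \<Longrightarrow> h \<in> carrier H \<Longrightarrow> \<phi> h \<in> carrier G" for \<phi> h
    by (auto simp: hom_def)
  have Nge: "t \<in> T \<Longrightarrow> L (inv\<^bsub>G\<^esub> (\<phi> t \<otimes>\<^bsub>G\<^esub> x) \<otimes>\<^bsub>G\<^esub> x) \<le> N \<phi> x" for t \<phi> x
    unfolding N_def using T(1) by (intro Max_ge) auto
  have Nin: "N \<phi> x = 0 \<or> (\<exists>t\<in>T. N \<phi> x = L (inv\<^bsub>G\<^esub> (\<phi> t \<otimes>\<^bsub>G\<^esub> x) \<otimes>\<^bsub>G\<^esub> x))" for \<phi> x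
  proof -
    have "N \<phi> x \<in> insert 0 ((\<lambda>t. L (inv\<^bsub>G\<^esub> (\<phi> t \<otimes>\<^bsub>G\<^esub> x) \<otimes>\<^bsub>G\<^esub> x)) ` T)"
      unfolding N_def using T(1) by (intro Max_in) auto
    then show ?thesis by auto
  qed
  have cls: "D \<in> Q \<Longrightarrow> \<phi> \<in> D \<Longrightarrow> \<phi> \<in> hom H G \<and> D = r `` {\<phi>}" for D \<phi>
  proof -
    assume D: "D \<in> Q" and p: "\<phi> \<in> D"
    from D obtain \<phi>0 where "D = r `` {\<phi>0}" "\<phi>0 \<in> hom H G" unfolding Q_def by (rule quotientE)
    with p have "(\<phi>0, \<phi>) \<in> r" by simp
    then have "\<phi> \<in> hom H G" using equiv_type[OF eqv] by auto
    moreover have "r `` {\<phi>0} = r `` {\<phi>}" by (rule equiv_class_eq[OF eqv \<open>(\<phi>0, \<phi>) \<in> r\<close>])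
    ultimately show ?thesis using \<open>D = r `` {\<phi>0}\<close> by simp
  qed
  have fin: "finite {D\<in>Q. \<exists>\<phi>\<in>D. N \<phi> (\<one>\<^bsub>G\<^esub>) \<le> n}" for n
  proof -
    define B where "B = {x\<in>carrier G. L (inv\<^bsub>G\<^esub> x) \<le> n}"
    have "B \<subseteq> (\<lambda>y. inv\<^bsub>G\<^esub> y) ` {y\<in>carrier G. L y \<le> n}"
    proof
      fix x assume "x \<in> B"
      then show "x \<in> (\<lambda>y. inv\<^bsub>G\<^esub> y) ` {y\<in>carrier G. L y \<le> n}"
        unfolding B_def by (auto intro!: image_eqI[of _ _ "inv\<^bsub>G\<^esub> x"])
    qed
    moreover have "finite ((\<lambda>y. inv\<^bsub>G\<^esub> y) ` {y\<in>carrier G. L y \<le> n})"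
      unfolding L_def by (rule finite_imageI[OF W.finite_ball[OF assms(3)]])
    ultimately have fB: "finite B" by (rule finite_subset)
    define XX where "XX = {\<phi>\<in>hom H G. N \<phi> (\<one>\<^bsub>G\<^esub>) \<le> n}"
    have "(\<lambda>\<phi>. restrict \<phi> T) ` XX \<subseteq> PiE T (\<lambda>_. B)"
    proof
      fix g assume "g \<in> (\<lambda>\<phi>. restrict \<phi> T) ` XX"
      then obtain \<phi> where \<phi>: "\<phi> \<in> XX" "g = restrict \<phi> T" by auto
      have "\<phi> t \<in> B" if "t \<in> T" for t
      proof -
        have c: "\<phi> t \<in> carrier G" using \<phi> that T(2) hc unfolding XX_def by auto
        have "L (inv\<^bsub>G\<^esub> (\<phi> t \<otimes>\<^bsub>G\<^esub> (\<one>\<^bsub>G\<^esub>)) \<otimes>\<^bsub>G\<^esub> (\<one>\<^bsub>G\<^esub>)) \<le> n"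
          using Nge[OF that, of \<phi> "(\<one>\<^bsub>G\<^esub>)"] \<phi> unfolding XX_def by auto
        then show ?thesis using c unfolding B_def by simp
      qed
      then show "g \<in> PiE T (\<lambda>_. B)" using \<phi> by auto
    qed
    moreover have "finite (PiE T (\<lambda>_. B))" by (rule finite_PiE[OF T(1)]) (rule fB)
    ultimately have fR: "finite ((\<lambda>\<phi>. restrict \<phi> T) ` XX)" by (rule finite_subset)
    define pick where "pick g = (SOME \<phi>. \<phi> \<in> XX \<and> restrict \<phi> T = g)" for g
    have "{D\<in>Q. \<exists>\<phi>\<in>D. N \<phi> (\<one>\<^bsub>G\<^esub>) \<le> n} \<subseteq> (\<lambda>g. r `` {pick g}) ` ((\<lambda>\<phi>. restrict \<phi> T) ` XX)"
    proof
      fix D assume "D \<in> {D\<in>Q. \<exists>\<phi>\<in>D. N \<phi> (\<one>\<^bsub>G\<^esub>) \<le> n}"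
      then obtain \<phi> where D: "D \<in> Q" "\<phi> \<in> D" "N \<phi> (\<one>\<^bsub>G\<^esub>) \<le> n" by auto
      with cls have \<phi>: "\<phi> \<in> hom H G" "D = r `` {\<phi>}" by auto
      have XX: "\<phi> \<in> XX" using \<phi> D unfolding XX_def by auto
      let ?g = "restrict \<phi> T"
      have "\<exists>\<psi>. \<psi> \<in> XX \<and> restrict \<psi> T = ?g" using XX by blast
      then have "pick ?g \<in> XX \<and> restrict (pick ?g) T = ?g" unfolding pick_def by (rule someI_ex)
      then have pk: "pick ?g \<in> XX" "restrict (pick ?g) T = ?g" by auto
      have "\<forall>t\<in>T. pick ?g t = \<phi> t"
      proof
        fix t assume t: "t \<in> T"
        have "restrict (pick ?g) T t = restrict \<phi> T t" using pk(2) by simp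
        then show "pick ?g t = \<phi> t" using t by simp
      qed
      then have "\<forall>h\<in>carrier H. pick ?g h = \<phi> h"
        using hom_agree_gen[OF assms(1,2), of "pick ?g" \<phi> T] pk(1) \<phi>(1) T unfolding XX_def by auto
      then have "r `` {pick ?g} = D"
        using class_agree[of H "pick ?g" \<phi> G] pk(1) \<phi> unfolding XX_def r_def by auto
      then show "D \<in> (\<lambda>g. r `` {pick g}) ` ((\<lambda>\<phi>. restrict \<phi> T) ` XX)"
        using XX by blast
    qed
    then show ?thesis by (rule finite_subset[OF _ finite_imageI[OF fR]])
  qed
  have "\<forall>n. \<exists>D\<in>Q. \<forall>\<phi>\<in>D. n < N \<phi> (\<one>\<^bsub>G\<^esub>)"
  proof
    fix n
    show "\<exists>D\<in>Q. \<forall>\<phi>\<in>D. n < N \<phi> (\<one>\<^bsub>G\<^esub>)"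
    proof (rule ccontr)
      assume "\<not> ?thesis"
      then have "Q \<subseteq> {D\<in>Q. \<exists>\<phi>\<in>D. N \<phi> (\<one>\<^bsub>G\<^esub>) \<le> n}" by (auto simp: not_less)
      then have "finite Q" by (rule finite_subset[OF _ fin[of n]])
      then show False using inf unfolding Q_def r_def by simp
    qed
  qed
  then have "\<forall>n. \<exists>D. D \<in> Q \<and> (\<forall>\<phi>\<in>D. n < N \<phi> (\<one>\<^bsub>G\<^esub>))" by blast
  from choice[OF this] obtain C where C0: "\<forall>n. C n \<in> Q \<and> (\<forall>\<phi>\<in>C n. n < N \<phi> (\<one>\<^bsub>G\<^esub>))" by blast
  have C: "\<And>n. C n \<in> Q" "\<And>n \<phi>. \<phi> \<in> C n \<Longrightarrow> n < N \<phi> (\<one>\<^bsub>G\<^esub>)" using C0 by auto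
  have Cne: "\<exists>\<phi>. \<phi> \<in> C n" for n
  proof -
    from C(1)[of n] obtain \<phi>0 where "C n = r `` {\<phi>0}" "\<phi>0 \<in> hom H G" unfolding Q_def by (rule quotientE)
    then show ?thesis using equiv_class_self[OF eqv] by blast
  qed
  define m where "m n = (LEAST k. \<exists>\<phi>\<in>C n. N \<phi> (\<one>\<^bsub>G\<^esub>) = k)" for n
  have "\<exists>\<phi>\<in>C n. N \<phi> (\<one>\<^bsub>G\<^esub>) = m n" for n
  proof -
    obtain \<phi> where "\<phi> \<in> C n" using Cne by blast
    then have "\<exists>k. \<exists>\<phi>\<in>C n. N \<phi> (\<one>\<^bsub>G\<^esub>) = k" by blast
    from LeastI_ex[OF this] show ?thesis unfolding m_def .
  qed
  then have "\<forall>n. \<exists>\<phi>. \<phi> \<in> C n \<and> N \<phi> (\<one>\<^bsub>G\<^esub>) = m n" by blast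
  from choice[OF this] obtain ph where ph0: "\<forall>n. ph n \<in> C n \<and> N (ph n) (\<one>\<^bsub>G\<^esub>) = m n" by blast
  have ph: "\<And>n. ph n \<in> C n" "\<And>n. N (ph n) (\<one>\<^bsub>G\<^esub>) = m n" using ph0 by auto
  have mle: "\<psi> \<in> C n \<Longrightarrow> m n \<le> N \<psi> (\<one>\<^bsub>G\<^esub>)" for \<psi> n
    unfolding m_def by (rule Least_le) blast
  have mgt: "n < m n" for n
  proof -
    have "n < N (ph n) (\<one>\<^bsub>G\<^esub>)" by (rule C(2)[OF ph(1)])
    then show ?thesis by (simp add: ph(2))
  qed
  have phh: "ph n \<in> hom H G" and Ccl: "C n = r `` {ph n}" for n
    using cls[OF C(1) ph(1)] by auto
  have key: "x \<in> carrier G \<Longrightarrow> m n \<le> N (ph n) x" for x n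
  proof -
    assume x: "x \<in> carrier G"
    define \<psi> where "\<psi> = (\<lambda>h. inv\<^bsub>G\<^esub> x \<otimes>\<^bsub>G\<^esub> ph n h \<otimes>\<^bsub>G\<^esub> inv\<^bsub>G\<^esub> (inv\<^bsub>G\<^esub> x))"
    have \<psi>h: "\<psi> \<in> hom H G" unfolding \<psi>_def by (rule conj_hom[OF assms(1,2) phh G.inv_closed[OF x]])
    have "(ph n, \<psi>) \<in> r" unfolding r_def hom_conj_rel_def using \<psi>h phh x
      by (auto simp: \<psi>_def intro!: bexI[of _ "inv\<^bsub>G\<^esub> x"])
    then have "\<psi> \<in> C n" using Ccl by simp
    then have "m n \<le> N \<psi> (\<one>\<^bsub>G\<^esub>)" by (rule mle)
    also have "N \<psi> (\<one>\<^bsub>G\<^esub>) = N (ph n) x"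
    proof -
      have "(\<lambda>t. L (inv\<^bsub>G\<^esub> (\<psi> t \<otimes>\<^bsub>G\<^esub> (\<one>\<^bsub>G\<^esub>)) \<otimes>\<^bsub>G\<^esub> (\<one>\<^bsub>G\<^esub>))) ` T
          = (\<lambda>t. L (inv\<^bsub>G\<^esub> (ph n t \<otimes>\<^bsub>G\<^esub> x) \<otimes>\<^bsub>G\<^esub> x)) ` T"
      proof (rule image_cong[OF refl])
        fix t assume "t \<in> T"
        then have "t \<in> carrier H" using T(2) by auto
        then show "L (inv\<^bsub>G\<^esub> (\<psi> t \<otimes>\<^bsub>G\<^esub> (\<one>\<^bsub>G\<^esub>)) \<otimes>\<^bsub>G\<^esub> (\<one>\<^bsub>G\<^esub>)) = L (inv\<^bsub>G\<^esub> (ph n t \<otimes>\<^bsub>G\<^esub> x) \<otimes>\<^bsub>G\<^esub> x)"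
          unfolding \<psi>_def using G.conj_dist[OF hc[OF phh] x] by simp
      qed
      then show ?thesis unfolding N_def by simp
    qed
    finally show ?thesis .
  qed
  have bound: "h \<in> generate H T \<Longrightarrow> \<exists>k. \<forall>n. L (ph n h) \<le> k * m n \<and> L (inv\<^bsub>G\<^esub> (ph n h)) \<le> k * m n" for h
  proof (induction rule: generate.induct)
    case one
    have "ph n (\<one>\<^bsub>H\<^esub>) = (\<one>\<^bsub>G\<^esub>)" for n
      using phh assms(1,2) by (simp add: group_hom_def group_hom_axioms_def group_hom.hom_one)
    then show ?case using W.wl_one L_def by (intro exI[of _ 0]) simp
  next
    case (incl t)
    have "L (ph n t) \<le> 1 * m n \<and> L (inv\<^bsub>G\<^esub> (ph n t)) \<le> 1 * m n" for n
    proof -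
      have c: "ph n t \<in> carrier G" using hc[OF phh] incl T(2) by auto
      have "L (inv\<^bsub>G\<^esub> (ph n t \<otimes>\<^bsub>G\<^esub> (\<one>\<^bsub>G\<^esub>)) \<otimes>\<^bsub>G\<^esub> (\<one>\<^bsub>G\<^esub>)) \<le> m n"
        using Nge[OF incl, of "ph n" "(\<one>\<^bsub>G\<^esub>)"] ph(2) by simp
      then show ?thesis using c W.wl_inv_eq[OF c] L_def by simp
    qed
    then show ?case by blast
  next
    case (inv t)
    have "L (ph n (inv\<^bsub>H\<^esub> t)) \<le> 1 * m n \<and> L (inv\<^bsub>G\<^esub> (ph n (inv\<^bsub>H\<^esub> t))) \<le> 1 * m n" for n
    proof -
      have tC: "t \<in> carrier H" using inv T(2) by auto
      have c: "ph n t \<in> carrier G" using hc[OF phh] tC by auto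
      have e: "ph n (inv\<^bsub>H\<^esub> t) = inv\<^bsub>G\<^esub> (ph n t)"
        using phh assms(1,2) tC by (simp add: group_hom_def group_hom_axioms_def group_hom.hom_inv)
      have "L (inv\<^bsub>G\<^esub> (ph n t \<otimes>\<^bsub>G\<^esub> (\<one>\<^bsub>G\<^esub>)) \<otimes>\<^bsub>G\<^esub> (\<one>\<^bsub>G\<^esub>)) \<le> m n"
        using Nge[OF inv, of "ph n" "(\<one>\<^bsub>G\<^esub>)"] ph(2) by simp
      then show ?thesis using c e W.wl_inv_eq[OF c] L_def by simp
    qed
    then show ?case by blast
  next
    case (eng h1 h2)
    have hC: "h1 \<in> carrier H" "h2 \<in> carrier H"
      using eng.hyps H.generate_in_carrier[OF T(2)] by auto
    obtain k1 where k1: "\<forall>n. L (ph n h1) \<le> k1 * m n \<and> L (inv\<^bsub>G\<^esub> (ph n h1)) \<le> k1 * m n" using eng by blast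
    obtain k2 where k2: "\<forall>n. L (ph n h2) \<le> k2 * m n \<and> L (inv\<^bsub>G\<^esub> (ph n h2)) \<le> k2 * m n" using eng by blast
    have "L (ph n (h1 \<otimes>\<^bsub>H\<^esub> h2)) \<le> (k1 + k2) * m n \<and> L (inv\<^bsub>G\<^esub> (ph n (h1 \<otimes>\<^bsub>H\<^esub> h2))) \<le> (k1 + k2) * m n" for n
    proof -
      have c: "ph n h1 \<in> carrier G" "ph n h2 \<in> carrier G" using hc[OF phh] hC by auto
      have e: "ph n (h1 \<otimes>\<^bsub>H\<^esub> h2) = ph n h1 \<otimes>\<^bsub>G\<^esub> ph n h2"
        using phh hC by (simp add: hom_def)
      have "L (ph n h1 \<otimes>\<^bsub>G\<^esub> ph n h2) \<le> L (ph n h1) + L (ph n h2)"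
        using W.wl_mult c L_def by simp
      moreover have "L (inv\<^bsub>G\<^esub> (ph n h2) \<otimes>\<^bsub>G\<^esub> inv\<^bsub>G\<^esub> (ph n h1)) \<le> L (inv\<^bsub>G\<^esub> (ph n h2)) + L (inv\<^bsub>G\<^esub> (ph n h1))"
        using W.wl_mult c L_def by simp
      moreover have "inv\<^bsub>G\<^esub> (ph n h1 \<otimes>\<^bsub>G\<^esub> ph n h2) = inv\<^bsub>G\<^esub> (ph n h2) \<otimes>\<^bsub>G\<^esub> inv\<^bsub>G\<^esub> (ph n h1)"
        using c by (simp add: G.inv_mult_group)
      ultimately show ?thesis using e k1[rule_format, of n] k2[rule_format, of n] by (simp add: add_mult_distrib)
    qed
    then show ?case by blast
  qed
  obtain \<omega> where \<omega>: "nonprincipal_ultrafilter \<omega>" using ex_npu by blast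
  define lam where "lam n = real (m n)" for n
  have lpos: "\<forall>n. lam n > 0"
  proof
    fix n have "0 < m n" using mgt[of n] by linarith
    then show "lam n > 0" by (simp add: lam_def)
  qed
  have llim: "filterlim lam at_top sequentially"
  proof (rule filterlim_at_top_mono[OF filterlim_real_sequentially])
    show "\<forall>\<^sub>F x in sequentially. real x \<le> lam x"
      using mgt unfolding lam_def by (intro always_eventually) (simp add: less_imp_le)
  qed
  have bdd: "\<forall>h\<in>carrier H. bdd_above (range (\<lambda>n. word_dist G S (ph n h \<otimes>\<^bsub>G\<^esub> (\<one>\<^bsub>G\<^esub>)) (\<one>\<^bsub>G\<^esub>) / lam n))"
  proof
    fix h assume hC: "h \<in> carrier H"
    then obtain k where k: "\<forall>n. L (ph n h) \<le> k * m n \<and> L (inv\<^bsub>G\<^esub> (ph n h)) \<le> k * m n"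
      using bound T(3) by blast
    have "word_dist G S (ph n h \<otimes>\<^bsub>G\<^esub> (\<one>\<^bsub>G\<^esub>)) (\<one>\<^bsub>G\<^esub>) / lam n \<le> real k" for n
    proof -
      have c: "ph n h \<in> carrier G" using hc[OF phh hC] .
      have "word_dist G S (ph n h \<otimes>\<^bsub>G\<^esub> (\<one>\<^bsub>G\<^esub>)) (\<one>\<^bsub>G\<^esub>) = real (L (inv\<^bsub>G\<^esub> (ph n h)))"
        using c by (simp add: word_dist_def L_def)
      also have "\<dots> \<le> real (k * m n)" using k by (simp only: of_nat_le_iff)
      also have "\<dots> = real k * lam n" by (simp add: lam_def)
      finally show ?thesis using lpos by (simp add: pos_divide_le_eq)
    qed
    then show "bdd_above (range (\<lambda>n. word_dist G S (ph n h \<otimes>\<^bsub>G\<^esub> (\<one>\<^bsub>G\<^esub>)) (\<one>\<^bsub>G\<^esub>) / lam n))"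
      by (intro bdd_aboveI2) blast
  qed
  obtain x where x: "\<forall>n. x n \<in> carrier G"
    "\<forall>h\<in>carrier H. ((\<lambda>n. word_dist G S (ph n h \<otimes>\<^bsub>G\<^esub> x n) (x n) / lam n) \<longlongrightarrow> 0) \<omega>"
  proof -
    have pre: "nonprincipal_ultrafilter \<omega> \<and> (\<forall>n. lam n > 0) \<and> filterlim lam at_top sequentially
       \<and> (\<forall>n. (\<one>\<^bsub>G\<^esub>) \<in> carrier G) \<and> (\<forall>n. ph n \<in> hom H G)
       \<and> (\<forall>h\<in>carrier H. bdd_above (range (\<lambda>n. word_dist G S (ph n h \<otimes>\<^bsub>G\<^esub> (\<one>\<^bsub>G\<^esub>)) (\<one>\<^bsub>G\<^esub>) / lam n)))"
      using \<omega> lpos llim phh bdd by simp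
    show ?thesis
      using assms(7)[unfolded has_F_Cone_def, rule_format, of \<omega> lam "\<lambda>_. (\<one>\<^bsub>G\<^esub>)" ph, OF pre] that by blast
  qed
  have "\<forall>t\<in>T. eventually (\<lambda>n. word_dist G S (ph n t \<otimes>\<^bsub>G\<^esub> x n) (x n) / lam n < 1) \<omega>"
  proof
    fix t assume "t \<in> T"
    then have "t \<in> carrier H" using T(2) by auto
    then have "((\<lambda>n. word_dist G S (ph n t \<otimes>\<^bsub>G\<^esub> x n) (x n) / lam n) \<longlongrightarrow> 0) \<omega>" using x(2) by blast
    from order_tendstoD(2)[OF this, of 1]
    show "eventually (\<lambda>n. word_dist G S (ph n t \<otimes>\<^bsub>G\<^esub> x n) (x n) / lam n < 1) \<omega>" by simp
  qed
  then have ev: "eventually (\<lambda>n. \<forall>t\<in>T. word_dist G S (ph n t \<otimes>\<^bsub>G\<^esub> x n) (x n) / lam n < 1) \<omega>"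
    using T(1) by (rule eventually_ball_finite[rotated])
  have "\<not> (\<forall>t\<in>T. word_dist G S (ph n t \<otimes>\<^bsub>G\<^esub> x n) (x n) / lam n < 1)" for n
  proof -
    have k: "m n \<le> N (ph n) (x n)" using key x(1) by blast
    have "N (ph n) (x n) \<noteq> 0" using k mgt[of n] by linarith
    then have "\<exists>t\<in>T. N (ph n) (x n) = L (inv\<^bsub>G\<^esub> (ph n t \<otimes>\<^bsub>G\<^esub> x n) \<otimes>\<^bsub>G\<^esub> x n)"
      using Nin[of "ph n" "x n"] by simp
    then obtain t where t: "t \<in> T" "N (ph n) (x n) = L (inv\<^bsub>G\<^esub> (ph n t \<otimes>\<^bsub>G\<^esub> x n) \<otimes>\<^bsub>G\<^esub> x n)"
      by (rule bexE)
    have "word_dist G S (ph n t \<otimes>\<^bsub>G\<^esub> x n) (x n) = real (N (ph n) (x n))"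
      using t by (simp add: word_dist_def L_def)
    then have "lam n \<le> word_dist G S (ph n t \<otimes>\<^bsub>G\<^esub> x n) (x n)" using k unfolding lam_def by simp
    then have "1 \<le> word_dist G S (ph n t \<otimes>\<^bsub>G\<^esub> x n) (x n) / lam n" using lpos by simp
    then show ?thesis using t(1) by (meson not_less)
  qed
  with ev have "eventually (\<lambda>n. False) \<omega>" by (simp add: eventually_mono)
  then show False using \<omega> by (simp add: nonprincipal_ultrafilter_def)
qed


end
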